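(* Let $G$ be a BDH graph with color classes $X$ and $Y$. Then each of the 2-sections of the hypergraphs $\mathcal{N}_X(G)$, $\mathcal{N}_X(G)^\uparrow$, $\mathcal{N}_Y(G)$ and $\mathcal{N}_Y(G)^\uparrow$ is a Ptolemaic graph.
   Context: $\mathcal{N}_X(G)=(N(y)\mid y\in Y)$ is the family of neighborhoods of vertices of $Y$, a hypergraph on $X$; $\mathcal{N}_Y(G)=(N(x)\mid x\in X)$ is defined symmetrically on $Y$. For a hypergraph $\mathcal{H}$, $\mathcal{H}^\uparrow$ is obtained by identifying equal members and keeping only inclusion-wise maximal members. The 2-section of a hypergraph $\mathcal{H}$ on $V$ is the graph on $V$ in which $u\neq v$ are adjacent iff some member of $\mathcal{H}$ contains both. A Ptolemaic graph is a graph that is both chordal (no induced chordless cycle of length $\ge4$) and distance hereditary. A graph is distance hereditary if distances in every connected induced subgraph equal distances in the graph; BDH means bipartite distance hereditary. *)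

theory Defs
  imports Main
begin

definition graph :: "'a set \<Rightarrow> ('a \<Rightarrow> 'a \<Rightarrow> bool) \<Rightarrow> bool" where
  "graph V E \<longleftrightarrow> finite V \<and> (\<forall>u v. E u v \<longrightarrow> u \<in> V \<and> v \<in> V \<and> u \<noteq> v \<and> E v u)"

text \<open>A walk inside the vertex set S (so walks in S are walks of the induced subgraph G[S]).\<close>
definition walk :: "'a set \<Rightarrow> ('a \<Rightarrow> 'a \<Rightarrow> bool) \<Rightarrow> 'a list \<Rightarrow> bool" where
  "walk S E xs \<longleftrightarrow> xs \<noteq> [] \<and> set xs \<subseteq> S \<and> (\<forall>i. Suc i < length xs \<longrightarrow> E (xs ! i) (xs ! Suc i))"

definition connected_graph :: "'a set \<Rightarrow> ('a \<Rightarrow> 'a \<Rightarrow> bool) \<Rightarrow> bool" where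
  "connected_graph S E \<longleftrightarrow>
     (\<forall>u\<in>S. \<forall>v\<in>S. \<exists>xs. walk S E xs \<and> hd xs = u \<and> last xs = v)"

definition gdist :: "'a set \<Rightarrow> ('a \<Rightarrow> 'a \<Rightarrow> bool) \<Rightarrow> 'a \<Rightarrow> 'a \<Rightarrow> nat" where
  "gdist S E u v = (LEAST n. \<exists>xs. walk S E xs \<and> hd xs = u \<and> last xs = v \<and> length xs = Suc n)"

definition distance_hereditary :: "'a set \<Rightarrow> ('a \<Rightarrow> 'a \<Rightarrow> bool) \<Rightarrow> bool" where
  "distance_hereditary V E \<longleftrightarrow>
     (\<forall>S. S \<subseteq> V \<longrightarrow> connected_graph S E \<longrightarrow>
        (\<forall>u\<in>S. \<forall>v\<in>S. gdist S E u v = gdist V E u v))"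

definition induced_cycle :: "'a set \<Rightarrow> ('a \<Rightarrow> 'a \<Rightarrow> bool) \<Rightarrow> 'a list \<Rightarrow> bool" where
  "induced_cycle V E xs \<longleftrightarrow> distinct xs \<and> set xs \<subseteq> V \<and>
     (\<forall>i < length xs. E (xs ! i) (xs ! ((i + 1) mod length xs))) \<and>
     (\<forall>i < length xs. \<forall>j < length xs. E (xs ! i) (xs ! j) \<longrightarrow>
          j = (i + 1) mod length xs \<or> i = (j + 1) mod length xs)"

definition chordal :: "'a set \<Rightarrow> ('a \<Rightarrow> 'a \<Rightarrow> bool) \<Rightarrow> bool" where
  "chordal V E \<longleftrightarrow> \<not> (\<exists>xs. length xs \<ge> 4 \<and> induced_cycle V E xs)"

definition ptolemaic :: "'a set \<Rightarrow> ('a \<Rightarrow> 'a \<Rightarrow> bool) \<Rightarrow> bool" where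
  "ptolemaic V E \<longleftrightarrow> chordal V E \<and> distance_hereditary V E"

definition BDH :: "'a set \<Rightarrow> 'a set \<Rightarrow> ('a \<Rightarrow> 'a \<Rightarrow> bool) \<Rightarrow> bool" where
  "BDH X Y E \<longleftrightarrow> graph (X \<union> Y) E \<and> X \<inter> Y = {} \<and>
     (\<forall>u v. E u v \<longrightarrow> (u \<in> X \<and> v \<in> Y) \<or> (u \<in> Y \<and> v \<in> X)) \<and>
     distance_hereditary (X \<union> Y) E"

definition nbhd :: "('a \<Rightarrow> 'a \<Rightarrow> bool) \<Rightarrow> 'a \<Rightarrow> 'a set" where
  "nbhd E v = {u. E v u}"

text \<open>The hypergraph N_X(G) = (N(y) | y \<in> Y), as its set of members (multiplicities
  do not affect the 2-section).\<close>
definition nbhd_hypergraph :: "('a \<Rightarrow> 'a \<Rightarrow> bool) \<Rightarrow> 'a set \<Rightarrow> 'a set set" where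
  "nbhd_hypergraph E Y = nbhd E ` Y"

text \<open>H\<up>: identify equal members, keep only inclusion-maximal members.\<close>
definition maximal_members :: "'a set set \<Rightarrow> 'a set set" where
  "maximal_members H = {e \<in> H. \<not> (\<exists>e'\<in>H. e \<subset> e')}"

definition two_section :: "'a set set \<Rightarrow> 'a \<Rightarrow> 'a \<Rightarrow> bool" where
  "two_section H u v \<longleftrightarrow> u \<noteq> v \<and> (\<exists>e\<in>H. u \<in> e \<and> v \<in> e)"

end

theory Submission
  imports Defs
begin


definition rs :: "'a set \<Rightarrow> ('a\<Rightarrow>'a\<Rightarrow>bool) \<Rightarrow> 'a\<Rightarrow>'a\<Rightarrow>bool" where
  "rs S R a b \<longleftrightarrow> R a b \<and> a\<in>S \<and> b\<in>S"

lemma walk_relpow: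
  "(\<exists>xs. walk S R xs \<and> hd xs = u \<and> last xs = v \<and> length xs = Suc n) \<longleftrightarrow> u \<in> S \<and> (rs S R ^^ n) u v"
proof (induction n arbitrary: v)
  case 0
  show ?case
  proof
    assume "\<exists>xs. walk S R xs \<and> hd xs = u \<and> last xs = v \<and> length xs = Suc 0"
    then obtain xs where "walk S R xs" "hd xs = u" "last xs = v" "length xs = Suc 0" by blast
    then obtain a where "xs = [a]" by (metis length_0_conv length_Suc_conv)
    then show "u \<in> S \<and> (rs S R ^^ 0) u v" using \<open>walk S R xs\<close> \<open>hd xs = u\<close> \<open>last xs = v\<close>
      by (auto simp: walk_def)
  next
    assume "u \<in> S \<and> (rs S R ^^ 0) u v"
    then show "\<exists>xs. walk S R xs \<and> hd xs = u \<and> last xs = v \<and> length xs = Suc 0"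
      by (intro exI[of _ "[u]"]) (auto simp: walk_def)
  qed
next
  case (Suc n)
  show ?case
  proof
    assume "\<exists>xs. walk S R xs \<and> hd xs = u \<and> last xs = v \<and> length xs = Suc (Suc n)"
    then obtain xs where w: "walk S R xs" "hd xs = u" "last xs = v" "length xs = Suc (Suc n)" by blast
    define ys where "ys = butlast xs"
    have xs: "xs = ys @ [v]" using w unfolding ys_def
      by (metis append_butlast_last_id list.size(3) nat.distinct(1))
    have ly: "length ys = Suc n" using w xs by simp
    have wy: "walk S R ys"
      unfolding walk_def
    proof (intro conjI allI impI)
      show "ys \<noteq> []" using ly by auto
      show "set ys \<subseteq> S" using w(1) xs unfolding walk_def by auto
      fix i assume "Suc i < length ys"
      then have "ys ! i = xs ! i" "ys ! Suc i = xs ! Suc i" "Suc i < length xs"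
        using xs by (auto simp: nth_append)
      then show "R (ys ! i) (ys ! Suc i)" using w(1) unfolding walk_def by metis
    qed
    have "hd ys = u" using w(2) ly xs by (cases ys) auto
    then have IH: "u \<in> S \<and> (rs S R ^^ n) u (last ys)" using Suc.IH wy ly by blast
    have "R (xs ! n) (xs ! Suc n)" using w(1) w(4) unfolding walk_def by auto
    moreover have "xs ! n = last ys" using ly xs
      by (subst last_conv_nth) (auto simp: nth_append)
    moreover have "xs ! Suc n = v" using ly xs by (simp add: nth_append)
    moreover have "last ys \<in> set xs" "v \<in> set xs" using xs ly
      by (auto, metis last_in_set list.size(3) nat.distinct(1))
    then have "last ys \<in> S" "v \<in> S" using w(1) unfolding walk_def by auto
    ultimately have "rs S R (last ys) v" by (auto simp: rs_def)
    then show "u \<in> S \<and> (rs S R ^^ Suc n) u v" using IH by auto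
  next
    assume "u \<in> S \<and> (rs S R ^^ Suc n) u v"
    then obtain w where "u \<in> S" "(rs S R ^^ n) u w" "rs S R w v" by (auto elim: relpowp_Suc_E)
    then obtain ys where y: "walk S R ys" "hd ys = u" "last ys = w" "length ys = Suc n"
      using Suc.IH by blast
    have "walk S R (ys @ [v])" unfolding walk_def
    proof (intro conjI allI impI)
      show "ys @ [v] \<noteq> []" by simp
      show "set (ys @ [v]) \<subseteq> S" using y(1) \<open>rs S R w v\<close> unfolding walk_def rs_def by auto
      fix i assume i: "Suc i < length (ys @ [v])"
      show "R ((ys @ [v]) ! i) ((ys @ [v]) ! Suc i)"
      proof (cases "Suc i < length ys")
        case True
        then show ?thesis using y(1) unfolding walk_def by (simp add: nth_append)
      next
        case False
        then have "i = n" using i y(4) by simp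
        moreover have "ys ! n = last ys" using y(4) by (subst last_conv_nth) auto
        ultimately show ?thesis using y \<open>rs S R w v\<close> by (simp add: nth_append rs_def)
      qed
    qed
    moreover have "hd (ys @ [v]) = u" using y by (cases ys) auto
    ultimately show "\<exists>xs. walk S R xs \<and> hd xs = u \<and> last xs = v \<and> length xs = Suc (Suc n)"
      using y by (intro exI[of _ "ys @ [v]"]) auto
  qed
qed

lemma gdist_rs: "gdist S R u v = (LEAST n. u \<in> S \<and> (rs S R ^^ n) u v)"
  unfolding gdist_def walk_relpow ..

lemma connected_rs: "connected_graph S R \<longleftrightarrow> (\<forall>u\<in>S. \<forall>v\<in>S. (rs S R)\<^sup>*\<^sup>* u v)"
proof -
  have "(\<exists>xs. walk S R xs \<and> hd xs = u \<and> last xs = v) \<longleftrightarrow> u \<in> S \<and> (rs S R)\<^sup>*\<^sup>* u v" for u v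
  proof
    assume "\<exists>xs. walk S R xs \<and> hd xs = u \<and> last xs = v"
    then obtain xs where "walk S R xs" "hd xs = u" "last xs = v" by blast
    moreover have "length xs = Suc (length xs - 1)" using \<open>walk S R xs\<close> unfolding walk_def by simp
    ultimately have "u \<in> S \<and> (rs S R ^^ (length xs - 1)) u v" using walk_relpow by metis
    then show "u \<in> S \<and> (rs S R)\<^sup>*\<^sup>* u v" using relpowp_imp_rtranclp by metis
  next
    assume "u \<in> S \<and> (rs S R)\<^sup>*\<^sup>* u v"
    then obtain n where "u \<in> S" "(rs S R ^^ n) u v" using rtranclp_imp_relpowp by metis
    then show "\<exists>xs. walk S R xs \<and> hd xs = u \<and> last xs = v" using walk_relpow by metis
  qed
  then show ?thesis unfolding connected_graph_def by blast
qed



lemma rs_rtranclp_sym: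
  assumes "\<And>a b. R a b \<Longrightarrow> R b a" "(rs S R)\<^sup>*\<^sup>* a b"
  shows "(rs S R)\<^sup>*\<^sup>* b a"
proof -
  have "symp (rs S R)" using assms(1) by (auto simp: symp_def rs_def)
  then show ?thesis using assms(2) by (meson symp_rtranclp sympD)
qed

lemma path_connected:
  assumes sym: "\<And>a b. R a b \<Longrightarrow> R b a" and ne: "ps \<noteq> []" and S: "set ps = S"
    and adj: "\<And>i. Suc i < length ps \<Longrightarrow> R (ps ! i) (ps ! Suc i)"
  shows "connected_graph S R"
proof -
  have r: "(rs S R)\<^sup>*\<^sup>* (ps ! 0) (ps ! i)" if "i < length ps" for i
    using that
  proof (induction i)
    case 0 then show ?case by simp
  next
    case (Suc i)
    have "rs S R (ps ! i) (ps ! Suc i)" using adj[OF Suc.prems] Suc.prems S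
      by (auto simp: rs_def)
    then show ?case using Suc by (meson Suc_lessD rtranclp.rtrancl_into_rtrancl)
  qed
  show ?thesis unfolding connected_rs
  proof (intro ballI)
    fix a b assume "a \<in> S" "b \<in> S"
    then obtain i j where "i < length ps" "a = ps ! i" "j < length ps" "b = ps ! j"
      using S by (metis in_set_conv_nth)
    moreover have "(rs S R)\<^sup>*\<^sup>* (ps ! i) (ps ! 0)"
      using rs_rtranclp_sym[of R S, OF sym r[OF \<open>i < length ps\<close>]] .
    ultimately show "(rs S R)\<^sup>*\<^sup>* a b" using r
      by (meson rtranclp_trans)
  qed
qed

lemma dh_shortcut:
  assumes dh: "distance_hereditary V R" and SV: "S \<subseteq> V" and con: "connected_graph S R"
    and u: "u \<in> S" and v: "v \<in> S" and uv: "u \<noteq> v" "\<not> R u v"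
    and w: "w \<in> V" "R u w" "R w v" and no: "\<forall>w\<in>S. \<not> (R u w \<and> R w v)"
  shows False
proof -
  have eq: "gdist S R u v = gdist V R u v" using dh SV con u v unfolding distance_hereditary_def by blast
  have a: "rs V R u w" "rs V R w v" using w u v SV by (auto simp: rs_def)
  have "(rs V R ^^ Suc 0) u w" using a(1) relpowp_Suc_0 by metis
  then have "(rs V R ^^ Suc (Suc 0)) u v"
    using relpowp_Suc_I[where P="rs V R" and n="Suc 0" and x=u and y=w and z=v] a(2) by blast
  then have "(rs V R ^^ 2) u v" by (simp add: numeral_2_eq_2)
  then have le: "gdist V R u v \<le> 2" using u SV unfolding gdist_rs by (auto intro: Least_le)
  obtain n where "(rs S R ^^ n) u v" using con u v unfolding connected_rs
    by (meson rtranclp_imp_relpowp)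
  then have P: "u \<in> S \<and> (rs S R ^^ gdist S R u v) u v" unfolding gdist_rs using u
    by (metis (mono_tags, lifting) LeastI)
  have "gdist S R u v \<le> 2" using eq le by simp
  then consider "gdist S R u v = 0" | "gdist S R u v = 1" | "gdist S R u v = 2" by linarith
  then show False
  proof cases
    case 1 then show ?thesis using P uv by auto
  next
    case 2 then show ?thesis using P uv by (auto simp: rs_def)
  next
    case 3 then have "(rs S R ^^ Suc (Suc 0)) u v" using P by (simp add: numeral_2_eq_2)
    then show ?thesis using no by (auto simp: rs_def elim!: relpowp_Suc_E relpowp_0_E)
  qed
qed

lemma dh_no_long_cycle:
  assumes dh: "distance_hereditary V R" and sym: "\<And>a b. R a b \<Longrightarrow> R b a"
    and cyc: "induced_cycle V R xs" and len: "length xs \<ge> 5"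
  shows False
proof -
  define k where "k = length xs"
  have dist: "distinct xs" and sub: "set xs \<subseteq> V"
    and C: "\<And>i. i < k \<Longrightarrow> R (xs ! i) (xs ! ((i + 1) mod k))"
    and I: "\<And>i j. i < k \<Longrightarrow> j < k \<Longrightarrow> R (xs ! i) (xs ! j) \<Longrightarrow> j = (i + 1) mod k \<or> i = (j + 1) mod k"
    using cyc unfolding induced_cycle_def k_def by auto
  have k5: "k \<ge> 5" using len k_def by simp
  define S where "S = set (tl xs)"
  have S': "S = set xs - {xs ! 0}" unfolding S_def using dist k5 k_def
    by (cases xs) auto
  have adj: "R (xs ! i) (xs ! Suc i)" if "Suc i < k" for i
    using C[of i] that by simp
  have con: "connected_graph S R"
  proof (rule path_connected[OF sym, where ps = "tl xs"])
    show "tl xs \<noteq> []" using k5 k_def by (cases xs) auto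
    show "set (tl xs) = S" by (simp add: S_def)
    fix i assume "Suc i < length (tl xs)"
    then show "R (tl xs ! i) (tl xs ! Suc i)" using adj[of "Suc i"] k_def by (simp add: nth_tl)
  qed
  have inS: "xs ! i \<in> S" if "0 < i" "i < k" for i
  proof -
    have i: "i < length xs" "0 < length xs" using that k_def by auto
    have "xs ! i \<noteq> xs ! 0" using nth_eq_iff_index_eq[OF dist i] that by simp
    then show ?thesis using that S' k_def by auto
  qed
  have "R (xs ! 0) (xs ! 1)" using adj[of 0] k5 by simp
  moreover have "R (xs ! (k - 1)) (xs ! 0)" using C[of "k - 1"] k5 by simp
  moreover have "xs ! 1 \<noteq> xs ! (k - 1)" using dist k5 k_def by (simp add: nth_eq_iff_index_eq)
  moreover have "\<not> R (xs ! 1) (xs ! (k - 1))"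
  proof
    assume "R (xs ! 1) (xs ! (k - 1))"
    from I[OF _ _ this] k5 show False by (simp add: mod_if split: if_splits)
  qed
  moreover have "\<forall>w\<in>S. \<not> (R (xs ! 1) w \<and> R w (xs ! (k - 1)))"
  proof (intro ballI notI)
    fix w assume "w \<in> S" "R (xs ! 1) w \<and> R w (xs ! (k - 1))"
    then obtain j where j: "j < k" "w = xs ! j" "j \<noteq> 0" using S' k_def
      by (metis DiffE in_set_conv_nth insertI1)
    have "j = 2" using I[of 1 j] j \<open>R (xs ! 1) w \<and> _\<close> k5 by (auto simp: mod_if split: if_splits)
    then show False using I[of j "k - 1"] j \<open>R (xs ! 1) w \<and> _\<close> k5 by (auto simp: mod_if split: if_splits)
  qed
  moreover have "xs ! 0 \<in> set xs" using k5 k_def by (cases xs) auto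
  then have "xs ! 0 \<in> V" using sub by blast
  moreover have "S \<subseteq> V" using sub S' by auto
  moreover have "xs ! 1 \<in> S" "xs ! (k - 1) \<in> S" using inS k5 by auto
  ultimately show False
    using dh_shortcut[OF dh _ con, of "xs ! 1" "xs ! (k - 1)" "xs ! 0"] sym by blast
qed



lemma BDH_facts:
  assumes "BDH X Y E"
  shows "\<And>a b. E a b \<Longrightarrow> E b a" "\<And>a b. E a b \<Longrightarrow> (a \<in> X \<and> b \<in> Y) \<or> (a \<in> Y \<and> b \<in> X)"
    "X \<inter> Y = {}" "\<And>a b. E a b \<Longrightarrow> a \<noteq> b" "distance_hereditary (X \<union> Y) E"
  using assms unfolding BDH_def graph_def by blast+

lemma BDH_sym: "BDH X Y E \<Longrightarrow> BDH Y X E"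
  unfolding BDH_def by (auto simp: Un_commute Int_commute)

lemma H_iff: "two_section (nbhd_hypergraph E Y) a b \<longleftrightarrow> a \<noteq> b \<and> (\<exists>y\<in>Y. E y a \<and> E y b)"
  unfolding two_section_def nbhd_hypergraph_def nbhd_def by auto

lemma half_a:
  assumes sym: "\<And>a b. E a b \<Longrightarrow> E b a"
    and Tc: "\<forall>y\<in>Y. (\<exists>x\<in>S. E y x) \<longrightarrow> y \<in> T" and ST: "S \<subseteq> T"
    and Hiff: "\<And>a b. H a b \<longleftrightarrow> a \<noteq> b \<and> (\<exists>y\<in>Y. E y a \<and> E y b)"
  shows "(rs S H ^^ n) u v \<Longrightarrow> (rs T E ^^ (2 * n)) u v"
proof (induction n arbitrary: v)
  case 0 then show ?case by simp
next
  case (Suc n)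
  then obtain w where w: "(rs S H ^^ n) u w" "rs S H w v" by (auto elim: relpowp_Suc_E)
  then obtain y where y: "y \<in> Y" "E y w" "E y v" "w \<in> S" "v \<in> S" using Hiff by (auto simp: rs_def)
  have yT: "y \<in> T" using Tc y by blast
  have a: "rs T E w y" "rs T E y v" using y yT ST sym by (auto simp: rs_def)
  have "(rs T E ^^ (2 * n)) u w" using Suc.IH w(1) .
  then have "(rs T E ^^ Suc (2 * n)) u y" using a(1) by (rule relpowp_Suc_I)
  then have "(rs T E ^^ Suc (Suc (2 * n))) u v" using a(2) by (rule relpowp_Suc_I)
  then show ?case by simp
qed

lemma half_b:
  assumes bdh: "BDH X Y E"
    and Hiff: "\<And>a b. H a b \<longleftrightarrow> a \<noteq> b \<and> (\<exists>y\<in>Y. E y a \<and> E y b)"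
    and SX: "S \<subseteq> X" and TXY: "T \<subseteq> X \<union> Y" and TX: "T \<inter> X \<subseteq> S" and u: "u \<in> S"
  shows "(rs T E ^^ m) u v \<Longrightarrow> (v \<in> X \<longrightarrow> (\<exists>n. 2 * n \<le> m \<and> (rs S H ^^ n) u v)) \<and>
     (v \<in> Y \<longrightarrow> (\<exists>n w. 2 * n + 1 \<le> m \<and> (rs S H ^^ n) u w \<and> E w v \<and> w \<in> S))"
proof (induction m arbitrary: v)
  case 0
  then have "v = u" by simp
  then show ?case using u SX BDH_facts(3)[OF bdh] by (auto intro: exI[of _ 0])
next
  case (Suc m)
  then obtain p where p: "(rs T E ^^ m) u p" "rs T E p v" by (auto elim: relpowp_Suc_E)
  have E: "E p v" "p \<in> T" "v \<in> T" using p(2) by (auto simp: rs_def)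
  note bip = BDH_facts(2)[OF bdh E(1)]
  have disj: "X \<inter> Y = {}" using BDH_facts(3)[OF bdh] .
  show ?case
  proof (intro conjI impI)
    assume vX: "v \<in> X"
    then have pY: "p \<in> Y" and vY: "v \<notin> Y" using bip disj by auto
    have vS: "v \<in> S" using vX E TX by auto
    obtain n w where nw: "2 * n + 1 \<le> m" "(rs S H ^^ n) u w" "E w p" "w \<in> S"
      using Suc.IH[OF p(1)] pY by blast
    show "\<exists>n. 2 * n \<le> Suc m \<and> (rs S H ^^ n) u v"
    proof (cases "w = v")
      case True then show ?thesis using nw by (intro exI[of _ n]) auto
    next
      case False
      have "H w v" using Hiff False pY nw(3) E(1) BDH_facts(1)[OF bdh] by blast
      then have "rs S H w v" using nw(4) vS by (simp add: rs_def)
      then have "(rs S H ^^ Suc n) u v" using nw(2) by (intro relpowp_Suc_I)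
      then show ?thesis using nw(1) by (intro exI[of _ "Suc n"]) auto
    qed
  next
    assume vY: "v \<in> Y"
    then have pX: "p \<in> X" using bip disj by auto
    have pS: "p \<in> S" using pX E TX by auto
    obtain n where "2 * n \<le> m" "(rs S H ^^ n) u p" using Suc.IH[OF p(1)] pX by blast
    then show "\<exists>n w. 2 * n + 1 \<le> Suc m \<and> (rs S H ^^ n) u w \<and> E w v \<and> w \<in> S"
      using E(1) pS by auto
  qed
qed

lemma half_dist:
  assumes bdh: "BDH X Y E"
    and Hiff: "\<And>a b. H a b \<longleftrightarrow> a \<noteq> b \<and> (\<exists>y\<in>Y. E y a \<and> E y b)"
    and SX: "S \<subseteq> X" and TXY: "T \<subseteq> X \<union> Y" and TX: "T \<inter> X = S"
    and Tc: "\<forall>y\<in>Y. (\<exists>x\<in>S. E y x) \<longrightarrow> y \<in> T"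
    and u: "u \<in> S" and v: "v \<in> S" and n0: "(rs S H ^^ n0) u v"
  shows "gdist T E u v = 2 * gdist S H u v"
proof -
  have ST: "S \<subseteq> T" using TX by auto
  define d where "d = gdist S H u v"
  have Pd: "(rs S H ^^ d) u v" unfolding d_def gdist_rs using u n0
    by (metis (mono_tags, lifting) LeastI)
  have "(rs T E ^^ (2 * d)) u v"
    using half_a[OF BDH_facts(1)[OF bdh] Tc ST Hiff Pd] by blast
  then have le: "gdist T E u v \<le> 2 * d" unfolding gdist_rs using u ST by (auto intro: Least_le)
  have "u \<in> T \<and> (rs T E ^^ gdist T E u v) u v" unfolding gdist_rs
    using u ST \<open>(rs T E ^^ (2 * d)) u v\<close> by (metis (mono_tags, lifting) LeastI subsetD)
  then obtain n where n: "2 * n \<le> gdist T E u v" "(rs S H ^^ n) u v"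
    using half_b[OF bdh Hiff SX TXY _ u] TX v SX by blast
  have "d \<le> n" unfolding d_def gdist_rs using n u by (auto intro: Least_le)
  then show ?thesis using le n unfolding d_def by linarith
qed



lemma H_dh:
  assumes bdh: "BDH X Y E"
    and Hiff: "\<And>a b. H a b \<longleftrightarrow> a \<noteq> b \<and> (\<exists>y\<in>Y. E y a \<and> E y b)"
  shows "distance_hereditary X H"
  unfolding distance_hereditary_def
proof (intro allI impI ballI)
  fix S u v assume SX: "S \<subseteq> X" and con: "connected_graph S H" and u: "u \<in> S" and v: "v \<in> S"
  note sym = BDH_facts(1)[OF bdh]
  note disj = BDH_facts(3)[OF bdh]
  have bipY: "\<And>y x. y \<in> Y \<Longrightarrow> E y x \<Longrightarrow> x \<in> X" using BDH_facts(2)[OF bdh] disj by blast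
  obtain n0 where n0: "(rs S H ^^ n0) u v" using con u v unfolding connected_rs
    by (meson rtranclp_imp_relpowp)
  define T where "T = S \<union> {y \<in> Y. \<exists>x\<in>S. E y x}"
  have TXY: "T \<subseteq> X \<union> Y" using SX unfolding T_def by auto
  have TX: "T \<inter> X = S" using SX disj unfolding T_def by auto
  have Tc: "\<forall>y\<in>Y. (\<exists>x\<in>S. E y x) \<longrightarrow> y \<in> T" unfolding T_def by auto
  have ST: "S \<subseteq> T" unfolding T_def by auto
  have d1: "gdist T E u v = 2 * gdist S H u v"
    using half_dist[OF bdh Hiff SX TXY TX Tc u v n0] .
  have n0': "(rs X H ^^ n0) u v" using n0 SX by (rule_tac relpowp_mono[OF _ n0]) (auto simp: rs_def)
  have d2: "gdist (X \<union> Y) E u v = 2 * gdist X H u v"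
    using half_dist[OF bdh Hiff _ _ _ _ _ _ n0'] u v SX by auto
  have SS: "(rs T E)\<^sup>*\<^sup>* s s'" if ss: "s \<in> S" "s' \<in> S" for s s'
  proof -
    obtain n where "(rs S H ^^ n) s s'" using con ss unfolding connected_rs
      by (meson rtranclp_imp_relpowp)
    then have "(rs T E ^^ (2 * n)) s s'" using half_a[OF sym Tc ST Hiff] by blast
    then show ?thesis by (rule relpowp_imp_rtranclp)
  qed
  have TS: "\<exists>s\<in>S. (rs T E)\<^sup>*\<^sup>* s a" if aT: "a \<in> T" for a
  proof (cases "a \<in> S")
    case True then show ?thesis by blast
  next
    case False
    then obtain s where "s \<in> S" "E a s" "a \<in> Y" using aT unfolding T_def by auto
    then have "rs T E s a" using ST \<open>a \<in> T\<close> sym by (auto simp: rs_def)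
    then show ?thesis using \<open>s \<in> S\<close> by blast
  qed
  have conT: "connected_graph T E" unfolding connected_rs
  proof (intro ballI)
    fix a b assume "a \<in> T" "b \<in> T"
    then obtain s s' where "s \<in> S" "(rs T E)\<^sup>*\<^sup>* s a" "s' \<in> S" "(rs T E)\<^sup>*\<^sup>* s' b"
      using TS by blast
    moreover have "(rs T E)\<^sup>*\<^sup>* a s" using rs_rtranclp_sym[of E T, OF sym calculation(2)] .
    ultimately show "(rs T E)\<^sup>*\<^sup>* a b" using SS by (meson rtranclp_trans)
  qed
  have "gdist T E u v = gdist (X \<union> Y) E u v"
    using BDH_facts(5)[OF bdh] TXY conT u v ST unfolding distance_hereditary_def by blast
  then show "gdist S H u v = gdist X H u v" using d1 d2 by simp
qed



lemma no_C4:
  assumes bdh: "BDH X Y E"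
    and Hiff: "\<And>a b. H a b \<longleftrightarrow> a \<noteq> b \<and> (\<exists>y\<in>Y. E y a \<and> E y b)"
    and cyc: "induced_cycle X H xs" and len: "length xs = 4"
  shows False
proof -
  note sym = BDH_facts(1)[OF bdh]
  note disj = BDH_facts(3)[OF bdh]
  have bip: "\<And>a b. E a b \<Longrightarrow> (a \<in> X \<and> b \<in> Y) \<or> (a \<in> Y \<and> b \<in> X)" using BDH_facts(2)[OF bdh] .
  have YY: "\<And>a b. a \<in> Y \<Longrightarrow> b \<in> Y \<Longrightarrow> \<not> E a b" using bip disj by blast
  have dist: "distinct xs" and sub: "set xs \<subseteq> X"
    and C: "\<And>i. i < 4 \<Longrightarrow> H (xs ! i) (xs ! ((i + 1) mod 4))"
    and I: "\<And>i j. i < 4 \<Longrightarrow> j < 4 \<Longrightarrow> H (xs ! i) (xs ! j) \<Longrightarrow> j = (i + 1) mod 4 \<or> i = (j + 1) mod 4"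
  proof -
    show "distinct xs" using cyc unfolding induced_cycle_def by blast
    show "set xs \<subseteq> X" using cyc unfolding induced_cycle_def by blast
    show "\<And>i. i < 4 \<Longrightarrow> H (xs ! i) (xs ! ((i + 1) mod 4))"
      using cyc len unfolding induced_cycle_def by metis
    show "\<And>i j. i < 4 \<Longrightarrow> j < 4 \<Longrightarrow> H (xs ! i) (xs ! j) \<Longrightarrow> j = (i + 1) mod 4 \<or> i = (j + 1) mod 4"
      using cyc len unfolding induced_cycle_def by metis
  qed
  define x0 x1 x2 x3 where "x0 = xs ! 0" "x1 = xs ! 1" "x2 = xs ! 2" "x3 = xs ! 3"
  have m: "(0+1) mod 4 = (1::nat)" "(1+1) mod 4 = (2::nat)" "(2+1) mod 4 = (3::nat)" "(3+1) mod 4 = (0::nat)"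
    by simp_all
  have "H x0 x1" using C[of 0, unfolded m] unfolding x0_x1_x2_x3_def by simp
  have "H x1 x2" using C[of 1, unfolded m] unfolding x0_x1_x2_x3_def by simp
  have "H x2 x3" using C[of 2, unfolded m] unfolding x0_x1_x2_x3_def by simp
  have "H x3 x0" using C[of 3, unfolded m] unfolding x0_x1_x2_x3_def by simp
  have n02: "\<not> H x0 x2" using I[of 0 2, unfolded m] unfolding x0_x1_x2_x3_def by auto
  have n13: "\<not> H x1 x3" using I[of 1 3, unfolded m] unfolding x0_x1_x2_x3_def by auto
  have d: "x0 \<noteq> x2" "x1 \<noteq> x3" using dist len unfolding x0_x1_x2_x3_def
    by (simp_all add: nth_eq_iff_index_eq)
  have x0X: "x0 \<in> X" using sub len unfolding x0_x1_x2_x3_def by (auto simp: numeral_eq_Suc)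
  obtain y01 where y01: "y01 \<in> Y" "E y01 x0" "E y01 x1" using \<open>H x0 x1\<close> Hiff by blast
  obtain y12 where y12: "y12 \<in> Y" "E y12 x1" "E y12 x2" using \<open>H x1 x2\<close> Hiff by blast
  obtain y23 where y23: "y23 \<in> Y" "E y23 x2" "E y23 x3" using \<open>H x2 x3\<close> Hiff by blast
  obtain y30 where y30: "y30 \<in> Y" "E y30 x3" "E y30 x0" using \<open>H x3 x0\<close> Hiff by blast
  have ne: "\<not> E y01 x2" "\<not> E y01 x3" "\<not> E y30 x1" "\<not> E y30 x2"
    using Hiff n02 n13 d y01 y30 by blast+
  have xY: "x1 \<notin> Y" "x2 \<notin> Y" "x3 \<notin> Y" using y12 y23 YY by blast+
  define ps where "ps = [y01, x1, y12, x2, y23, x3, y30]"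
  have con: "connected_graph (set ps) E"
  proof (rule path_connected[OF sym, where ps = ps])
    show "ps \<noteq> []" unfolding ps_def by simp
    show "set ps = set ps" ..
    fix i assume "Suc i < length ps"
    then have "i = 0 \<or> i = 1 \<or> i = 2 \<or> i = 3 \<or> i = 4 \<or> i = 5" unfolding ps_def by auto
    moreover have "E x1 y12" "E x2 y23" "E x3 y30" using y12 y23 y30 sym by blast+
    ultimately show "E (ps ! i) (ps ! Suc i)" unfolding ps_def
      using y01 y12 y23 y30 by (elim disjE) simp_all
  qed
  have "x1 \<in> X" "x2 \<in> X" "x3 \<in> X"
    using sub len unfolding x0_x1_x2_x3_def by (auto simp: numeral_eq_Suc)
  then have sub8: "set ps \<subseteq> X \<union> Y" using y01 y12 y23 y30 unfolding ps_def by simp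
  have "y01 \<noteq> y30" using y01 ne by auto
  moreover have "\<not> E y01 y30" using YY y01 y30 by blast
  moreover have "\<forall>w\<in>set ps. \<not> (E y01 w \<and> E w y30)"
  proof
    fix w assume "w \<in> set ps"
    have "\<not> E x1 y30" using ne(3) sym by blast
    then show "\<not> (E y01 w \<and> E w y30)" using \<open>w \<in> set ps\<close> YY y01 y12 y23 y30 ne
      unfolding ps_def by auto
  qed
  moreover have "E x0 y30" using y30 sym by blast
  moreover have "y01 \<in> set ps" "y30 \<in> set ps" unfolding ps_def by auto
  moreover have "x0 \<in> X \<union> Y" using x0X by blast
  ultimately show False
    using dh_shortcut[OF BDH_facts(5)[OF bdh] sub8 con, of y01 y30 x0] y01 by blast
qed

lemma main_half:
  assumes bdh: "BDH X Y E"
  shows "ptolemaic X (two_section (nbhd_hypergraph E Y))"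
proof -
  let ?H = "two_section (nbhd_hypergraph E Y)"
  have Hiff: "\<And>a b. ?H a b \<longleftrightarrow> a \<noteq> b \<and> (\<exists>y\<in>Y. E y a \<and> E y b)" by (rule H_iff)
  have dh: "distance_hereditary X ?H" using H_dh[OF bdh Hiff] .
  have Hsym: "\<And>a b. ?H a b \<Longrightarrow> ?H b a" using Hiff by blast
  have "chordal X ?H" unfolding chordal_def
  proof
    assume "\<exists>xs. 4 \<le> length xs \<and> induced_cycle X ?H xs"
    then obtain xs where "4 \<le> length xs" "induced_cycle X ?H xs" by blast
    show False
    proof (cases "length xs = 4")
      case True then show ?thesis using no_C4[OF bdh Hiff] \<open>induced_cycle X ?H xs\<close> by blast
    next
      case False
      then have "5 \<le> length xs" using \<open>4 \<le> length xs\<close> by linarith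
      then show ?thesis using dh_no_long_cycle[OF dh Hsym] \<open>induced_cycle X ?H xs\<close> by blast
    qed
  qed
  then show ?thesis using dh unfolding ptolemaic_def by blast
qed

lemma two_section_max:
  assumes "finite F"
  shows "two_section (maximal_members F) = two_section F"
proof (intro ext)
  fix u v
  have ex: "\<exists>e'\<in>maximal_members F. e \<subseteq> e'" if eF: "e \<in> F" for e
  proof -
    obtain m where m: "m \<in> F" "e \<subseteq> m" "\<forall>b. b \<in> F \<and> e \<subseteq> b \<longrightarrow> m \<subseteq> b \<longrightarrow> m = b"
      using finite_has_maximal2[of "{b \<in> F. e \<subseteq> b}" e] assms eF by auto
    then have "m \<in> maximal_members F" unfolding maximal_members_def by blast
    then show ?thesis using m by blast
  qed
  have sub: "maximal_members F \<subseteq> F" unfolding maximal_members_def by auto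
  show "two_section (maximal_members F) u v = two_section F u v"
  proof
    assume "two_section (maximal_members F) u v"
    then obtain e where "u \<noteq> v" "e \<in> maximal_members F" "u \<in> e" "v \<in> e"
      unfolding two_section_def by blast
    then show "two_section F u v" using sub unfolding two_section_def by blast
  next
    assume "two_section F u v"
    then obtain e where "u \<noteq> v" "e \<in> F" "u \<in> e" "v \<in> e"
      unfolding two_section_def by blast
    moreover obtain e' where "e' \<in> maximal_members F" "e \<subseteq> e'" using ex[OF \<open>e \<in> F\<close>] by blast
    ultimately show "two_section (maximal_members F) u v" unfolding two_section_def by blast
  qed
qed

theorem proposition2:
  fixes X Y :: "'a set" and E :: "'a \<Rightarrow> 'a \<Rightarrow> bool"
  assumes "BDH X Y E"
  shows "ptolemaic X (two_section (nbhd_hypergraph E Y)) \<and>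
         ptolemaic X (two_section (maximal_members (nbhd_hypergraph E Y))) \<and>
         ptolemaic Y (two_section (nbhd_hypergraph E X)) \<and>
         ptolemaic Y (two_section (maximal_members (nbhd_hypergraph E X)))"
proof -
  have fin: "finite (X \<union> Y)" using assms unfolding BDH_def graph_def by blast
  have fY: "finite (nbhd_hypergraph E Y)" "finite (nbhd_hypergraph E X)"
    using fin unfolding nbhd_hypergraph_def by auto
  show ?thesis
    using main_half[OF assms] main_half[OF BDH_sym[OF assms]] two_section_max[OF fY(1)]
      two_section_max[OF fY(2)] by simp
qed


end
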